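(* Let $\rho$ be a locally absolutely continuous function quasi-norm with the Fatou property over a $\sigma$-finite measure space $(\Omega,\Sigma,\mu)$, and let $(\Theta,\mathcal{T},\nu)$ be another $\sigma$-finite measure space. Let $f\colon\Omega\times\Theta\to[0,\infty]$ and $g\colon\Theta\times\Omega\to[0,\infty]$ be measurable with respect to the product $\sigma$-algebras. Then the functions $\Theta\to[0,\infty]$ given by $\theta\mapsto\rho(f(\cdot,\theta))$ and $\theta\mapsto\rho(g(\theta,\cdot))$ are measurable.
   Context: $L_0^+(\mu)$: measurable functions $\Omega\to[0,\infty]$ modulo a.e. equality. A function quasi-norm is $\rho\colon L_0^+(\mu)\to[0,\infty]$ with (F1) $\rho(tf)=t\rho(f)$, $t\ge0$; (F2) $f\le g$ a.e. $\Rightarrow\rho(f)\le\rho(g)$; (F3) $\rho(\chi_E)<\infty$ if $\mu(E)<\infty$; (F4) for all $E$ with $\mu(E)<\infty$ and $\varepsilon>0$ there is $\delta>0$ with $\mu(A)\le\varepsilon$ whenever $A\subseteq E$ measurable and $\rho(\chi_A)\le\delta$; (F5) $\rho(f+g)\le\kappa(\rho(f)+\rho(g))$. Fatou property: $\rho(\lim f_n)\le\lim\rho(f_n)$ for non-decreasing $(f_n)$. $h\in L_0^+(\mu)$ with $\rho(h)<\infty$ is absolutely continuous if $\lim_n\rho(f_n)=\rho(\lim_nf_n)$ for every non-increasing $(f_n)$ in $L_0^+(\mu)$ with $f_1\le h$; $\rho$ is locally absolutely continuous if $\chi_E$ is absolutely continuous for every $E\in\Sigma$ with $\mu(E)<\infty$.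 *)

theory Defs
  imports "HOL-Analysis.Analysis"
begin

text \<open>Elements of L_0^+(mu) are represented by Borel-measurable functions
  into ennreal; a functional rho on them is only considered on measurable arguments.
  Invariance under a.e. equality follows from (F2), stated with a.e. inequality.\<close>

definition function_quasi_norm :: "'a measure \<Rightarrow> (('a \<Rightarrow> ennreal) \<Rightarrow> ennreal) \<Rightarrow> bool" where
  "function_quasi_norm M \<rho> \<longleftrightarrow>
     (\<forall>f \<in> borel_measurable M. \<forall>t::real. t \<ge> 0 \<longrightarrow>
         \<rho> (\<lambda>x. ennreal t * f x) = ennreal t * \<rho> f) \<and>
     (\<forall>f \<in> borel_measurable M. \<forall>g \<in> borel_measurable M.
         (AE x in M. f x \<le> g x) \<longrightarrow> \<rho> f \<le> \<rho> g) \<and>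
     (\<forall>E \<in> sets M. emeasure M E < \<infinity> \<longrightarrow> \<rho> (indicator E) < \<infinity>) \<and>
     (\<forall>E \<in> sets M. emeasure M E < \<infinity> \<longrightarrow>
        (\<forall>\<epsilon>::real. \<epsilon> > 0 \<longrightarrow> (\<exists>\<delta>::real. \<delta> > 0 \<and>
           (\<forall>A \<in> sets M. A \<subseteq> E \<longrightarrow> \<rho> (indicator A) \<le> ennreal \<delta>
               \<longrightarrow> emeasure M A \<le> ennreal \<epsilon>)))) \<and>
     (\<exists>\<kappa>::real. \<kappa> \<ge> 1 \<and> (\<forall>f \<in> borel_measurable M. \<forall>g \<in> borel_measurable M.
         \<rho> (\<lambda>x. f x + g x) \<le> ennreal \<kappa> * (\<rho> f + \<rho> g)))"

definition fatou_property :: "'a measure \<Rightarrow> (('a \<Rightarrow> ennreal) \<Rightarrow> ennreal) \<Rightarrow> bool" where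
  "fatou_property M \<rho> \<longleftrightarrow>
     (\<forall>F :: nat \<Rightarrow> 'a \<Rightarrow> ennreal. (\<forall>n. F n \<in> borel_measurable M) \<longrightarrow>
        (AE x in M. incseq (\<lambda>n. F n x)) \<longrightarrow>
        \<rho> (\<lambda>x. SUP n. F n x) \<le> (SUP n. \<rho> (F n)))"

definition qn_absolutely_continuous ::
  "'a measure \<Rightarrow> (('a \<Rightarrow> ennreal) \<Rightarrow> ennreal) \<Rightarrow> ('a \<Rightarrow> ennreal) \<Rightarrow> bool" where
  "qn_absolutely_continuous M \<rho> h \<longleftrightarrow>
     h \<in> borel_measurable M \<and> \<rho> h < \<infinity> \<and>
     (\<forall>F :: nat \<Rightarrow> 'a \<Rightarrow> ennreal. (\<forall>n. F n \<in> borel_measurable M) \<longrightarrow>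
        (AE x in M. decseq (\<lambda>n. F n x)) \<longrightarrow>
        (AE x in M. F 0 x \<le> h x) \<longrightarrow>
        (\<lambda>n. \<rho> (F n)) \<longlonglongrightarrow> \<rho> (\<lambda>x. INF n. F n x))"

definition locally_absolutely_continuous ::
  "'a measure \<Rightarrow> (('a \<Rightarrow> ennreal) \<Rightarrow> ennreal) \<Rightarrow> bool" where
  "locally_absolutely_continuous M \<rho> \<longleftrightarrow>
     (\<forall>E \<in> sets M. emeasure M E < \<infinity> \<longrightarrow> qn_absolutely_continuous M \<rho> (indicator E))"

end

theory Submission imports Defs begin

lemma INF_mult_left_ennreal':
  fixes f :: "nat \<Rightarrow> ennreal"
  assumes c: "c > 0"
  shows "ennreal c * (INF i. f i) = (INF i. ennreal c * f i)"
proof (rule antisym)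
  show "ennreal c * (INF i. f i) \<le> (INF i. ennreal c * f i)"
    by (intro INF_greatest mult_left_mono INF_lower) auto
  have "ennreal (1/c) * (INF i. ennreal c * f i) \<le> f i" for i
  proof -
    have "ennreal (1/c) * (INF i. ennreal c * f i) \<le> ennreal (1/c) * (ennreal c * f i)"
      by (intro mult_left_mono INF_lower) auto
    also have "\<dots> = f i" using c
      by (simp add: mult.assoc[symmetric] ennreal_mult[symmetric])
    finally show ?thesis .
  qed
  then have "ennreal (1/c) * (INF i. ennreal c * f i) \<le> (INF i. f i)"
    by (intro INF_greatest) auto
  then have "ennreal c * (ennreal (1/c) * (INF i. ennreal c * f i)) \<le> ennreal c * (INF i. f i)"
    by (intro mult_left_mono) auto
  then show "(INF i. ennreal c * f i) \<le> ennreal c * (INF i. f i)" using c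
    by (simp add: mult.assoc[symmetric] ennreal_mult[symmetric])
qed

inductive_set CC :: "'a measure \<Rightarrow> 'b measure \<Rightarrow> 'a set \<Rightarrow> ('a \<times> 'b \<Rightarrow> ennreal) set"
  for M N E where
  base: "p \<in> measurable N (count_space (UNIV :: nat set)) \<Longrightarrow> (\<And>i. h i \<in> borel_measurable M) \<Longrightarrow>
    (\<And>i \<omega>. \<omega> \<in> space M \<Longrightarrow> h i \<omega> \<le> ennreal K * indicator E \<omega>) \<Longrightarrow>
    (\<lambda>x. h (p (snd x)) (fst x)) \<in> CC M N E"
| cong: "g \<in> CC M N E \<Longrightarrow> (\<And>x. x \<in> space M \<times> space N \<Longrightarrow> f x = g x) \<Longrightarrow> f \<in> CC M N E"
| inc: "(\<And>n. F n \<in> CC M N E) \<Longrightarrow> (\<And>x. x \<in> space M \<times> space N \<Longrightarrow> incseq (\<lambda>n. F n x)) \<Longrightarrow>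
    (\<And>n x. x \<in> space M \<times> space N \<Longrightarrow> F n x \<le> ennreal K * indicator (E \<times> space N) x) \<Longrightarrow>
    (\<lambda>x. SUP n. F n x) \<in> CC M N E"
| dec: "(\<And>n. F n \<in> CC M N E) \<Longrightarrow> (\<And>x. x \<in> space M \<times> space N \<Longrightarrow> decseq (\<lambda>n. F n x)) \<Longrightarrow>
    (\<And>n x. x \<in> space M \<times> space N \<Longrightarrow> F n x \<le> ennreal K * indicator (E \<times> space N) x) \<Longrightarrow>
    (\<lambda>x. INF n. F n x) \<in> CC M N E"

lemma CC_meas: "f \<in> CC M N E \<Longrightarrow> f \<in> borel_measurable (M \<Otimes>\<^sub>M N)"
proof (induction rule: CC.induct)
  case (base p h K)
  show ?case
    by (rule measurable_compose_countable[where g="\<lambda>x. p (snd x)" and f="\<lambda>i x. h i (fst x)"])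
       (use base in auto)
next
  case (cong g f)
  then show ?case by (subst measurable_cong[where g=g]) (auto simp: space_pair_measure)
qed auto

lemma CC_bnd: "f \<in> CC M N E \<Longrightarrow> \<exists>K. \<forall>x \<in> space M \<times> space N. f x \<le> ennreal K * indicator (E \<times> space N) x"
proof (induction rule: CC.induct)
  case (base p h K)
  then show ?case by (intro exI[of _ K]) (auto simp: indicator_def)
next
  case (cong g f)
  then show ?case by metis
next
  case (inc F K)
  then show ?case by (intro exI[of _ K]) (auto intro: SUP_least)
next
  case (dec F K)
  then show ?case by (intro exI[of _ K]) (auto intro: INF_lower2)
qed


lemma fqn_F1:
  assumes "function_quasi_norm M \<rho>" "f \<in> borel_measurable M" "t \<ge> 0"
  shows "\<rho> (\<lambda>x. ennreal t * f x) = ennreal t * \<rho> f"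
proof -
  have "\<forall>f \<in> borel_measurable M. \<forall>t::real. t \<ge> 0 \<longrightarrow> \<rho> (\<lambda>x. ennreal t * f x) = ennreal t * \<rho> f"
    using assms(1)[unfolded function_quasi_norm_def, THEN conjunct1] .
  then show ?thesis using assms(2,3) by blast
qed

lemma fqn_F2:
  assumes "function_quasi_norm M \<rho>" "f \<in> borel_measurable M" "g \<in> borel_measurable M"
    "\<And>x. x \<in> space M \<Longrightarrow> f x \<le> g x"
  shows "\<rho> f \<le> \<rho> g"
proof -
  have H: "\<forall>f \<in> borel_measurable M. \<forall>g \<in> borel_measurable M.
         (AE x in M. f x \<le> g x) \<longrightarrow> \<rho> f \<le> \<rho> g"
    using assms(1)[unfolded function_quasi_norm_def, THEN conjunct2, THEN conjunct1] .
  have "AE x in M. f x \<le> g x" using assms(4) by (rule AE_I2)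
  then show ?thesis using H assms(2,3) by blast
qed

lemma fqn_eq:
  assumes "function_quasi_norm M \<rho>" "f \<in> borel_measurable M" "g \<in> borel_measurable M"
    "\<And>x. x \<in> space M \<Longrightarrow> f x = g x"
  shows "\<rho> f = \<rho> g"
  using fqn_F2[OF assms(1,2,3)] fqn_F2[OF assms(1,3,2)] assms(4) by (simp add: antisym)

lemma fatou_rule:
  assumes "fatou_property M \<rho>" "\<And>n. F n \<in> borel_measurable M"
    "\<And>x. x \<in> space M \<Longrightarrow> incseq (\<lambda>n. F n x)"
  shows "\<rho> (\<lambda>x. SUP n. F n x) \<le> (SUP n. \<rho> (F n))"
proof -
  have "AE x in M. incseq (\<lambda>n. F n x)" using assms(3) by (rule AE_I2)
  then show ?thesis using assms(1,2) unfolding fatou_property_def by blast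
qed

lemma abs_cont_scaled:
  assumes fqn: "function_quasi_norm M \<rho>" and lac: "locally_absolutely_continuous M \<rho>"
    and E: "E \<in> sets M" "emeasure M E < \<infinity>"
    and F: "\<And>n. F n \<in> borel_measurable M"
    and dec: "\<And>\<omega>. \<omega> \<in> space M \<Longrightarrow> decseq (\<lambda>n. F n \<omega>)"
    and bnd: "\<And>\<omega>. \<omega> \<in> space M \<Longrightarrow> F 0 \<omega> \<le> ennreal K * indicator E \<omega>"
  shows "(\<lambda>n. \<rho> (F n)) \<longlonglongrightarrow> \<rho> (\<lambda>\<omega>. INF n. F n \<omega>)"
proof -
  define K1 where "K1 = max 1 K"
  have K1: "K1 > 0" "K \<le> K1" unfolding K1_def by auto
  define G where "G n \<omega> = ennreal (1/K1) * F n \<omega>" for n \<omega>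
  have G: "G n \<in> borel_measurable M" for n unfolding G_def using F by measurable
  have ac: "qn_absolutely_continuous M \<rho> (indicator E)"
    using lac E unfolding locally_absolutely_continuous_def by blast
  have "(\<lambda>n. \<rho> (G n)) \<longlonglongrightarrow> \<rho> (\<lambda>x. INF n. G n x)"
  proof -
    have "AE x in M. decseq (\<lambda>n. G n x)"
    proof (rule AE_I2)
      fix x assume "x \<in> space M"
      then show "decseq (\<lambda>n. G n x)" using dec unfolding G_def decseq_def
        by (auto intro: mult_left_mono)
    qed
    moreover have "AE x in M. G 0 x \<le> indicator E x"
    proof (rule AE_I2)
      fix x assume x: "x \<in> space M"
      have "G 0 x \<le> ennreal (1/K1) * (ennreal K1 * indicator E x)"
      proof -
        have "F 0 x \<le> ennreal K1 * indicator E x"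
        proof -
          have "ennreal K * indicator E x \<le> ennreal K1 * indicator E x"
            by (rule mult_right_mono[OF ennreal_leI[OF K1(2)]]) simp
          then show ?thesis using bnd[OF x] by (rule order_trans[rotated])
        qed
        then show ?thesis unfolding G_def by (intro mult_left_mono) auto
      qed
      also have "\<dots> = indicator E x" using K1
        by (simp add: mult.assoc[symmetric] ennreal_mult[symmetric])
      finally show "G 0 x \<le> indicator E x" .
    qed
    ultimately show ?thesis using ac G unfolding qn_absolutely_continuous_def by blast
  qed
  then have T: "(\<lambda>n. ennreal K1 * \<rho> (G n)) \<longlonglongrightarrow> ennreal K1 * \<rho> (\<lambda>x. INF n. G n x)"
    by (intro tendsto_mult_ennreal tendsto_const) (use K1 in auto)
  moreover have eq1: "ennreal K1 * \<rho> (G n) = \<rho> (F n)" for n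
  proof -
    have "ennreal K1 * \<rho> (G n) = \<rho> (\<lambda>x. ennreal K1 * G n x)"
      using fqn_F1[OF fqn G, of K1] K1 by simp
    also have "(\<lambda>x. ennreal K1 * G n x) = F n" using K1
      by (auto simp: G_def mult.assoc[symmetric] ennreal_mult[symmetric])
    finally show ?thesis .
  qed
  moreover have eq2: "ennreal K1 * \<rho> (\<lambda>x. INF n. G n x) = \<rho> (\<lambda>\<omega>. INF n. F n \<omega>)"
  proof -
    have "ennreal K1 * \<rho> (\<lambda>x. INF n. G n x) = \<rho> (\<lambda>x. ennreal K1 * (INF n. G n x))"
      using fqn_F1[OF fqn, of "\<lambda>x. INF n. G n x" K1] K1 G by simp
    also have "(\<lambda>x. ennreal K1 * (INF n. G n x)) = (\<lambda>\<omega>. INF n. F n \<omega>)"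
    proof
      fix x
      have "ennreal K1 * (INF n. G n x) = ennreal K1 * (ennreal (1/K1) * (INF n. F n x))"
        unfolding G_def using K1 by (simp add: INF_mult_left_ennreal')
      also have "\<dots> = (INF n. F n x)" using K1
        by (simp add: mult.assoc[symmetric] ennreal_mult[symmetric])
      finally show "ennreal K1 * (INF n. G n x) = (INF n. F n x)" .
    qed
    finally show ?thesis .
  qed
  ultimately show ?thesis by (simp only: eq1 eq2)
qed


lemma CC_H:
  assumes fqn: "function_quasi_norm M \<rho>" and fat: "fatou_property M \<rho>"
    and lac: "locally_absolutely_continuous M \<rho>"
    and E: "E \<in> sets M" "emeasure M E < \<infinity>"
    and f: "f \<in> CC M N E"
  shows "(\<lambda>\<theta>. \<rho> (\<lambda>\<omega>. f (\<omega>, \<theta>))) \<in> borel_measurable N"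
  using f
proof (induction rule: CC.induct)
  case (base p h K)
  have "(\<lambda>\<theta>. (\<lambda>i. \<rho> (h i)) (p \<theta>)) \<in> borel_measurable N"
    by (rule measurable_compose[OF base(1)]) simp
  then show ?case by simp
next
  case (cong g f)
  have "(\<lambda>\<theta>. \<rho> (\<lambda>\<omega>. f (\<omega>, \<theta>))) \<in> borel_measurable N \<longleftrightarrow> (\<lambda>\<theta>. \<rho> (\<lambda>\<omega>. g (\<omega>, \<theta>))) \<in> borel_measurable N"
  proof (rule measurable_cong)
    fix \<theta> assume th: "\<theta> \<in> space N"
    have gm: "g \<in> borel_measurable (M \<Otimes>\<^sub>M N)" using cong.hyps(1) by (rule CC_meas)
    have fm: "f \<in> borel_measurable (M \<Otimes>\<^sub>M N)" using CC.cong[OF cong.hyps(1,2)] by (rule CC_meas)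
    show "\<rho> (\<lambda>\<omega>. f (\<omega>, \<theta>)) = \<rho> (\<lambda>\<omega>. g (\<omega>, \<theta>))"
      by (rule fqn_eq[OF fqn measurable_Pair1[OF fm th] measurable_Pair1[OF gm th]])
         (use cong.hyps(2) th in auto)
  qed
  then show ?case using cong.IH by blast
next
  case (inc F K)
  have Fm: "F n \<in> borel_measurable (M \<Otimes>\<^sub>M N)" for n using inc.hyps(1) by (rule CC_meas)
  have "(\<lambda>\<theta>. \<rho> (\<lambda>\<omega>. SUP n. F n (\<omega>, \<theta>))) \<in> borel_measurable N \<longleftrightarrow>
        (\<lambda>\<theta>. SUP n. \<rho> (\<lambda>\<omega>. F n (\<omega>, \<theta>))) \<in> borel_measurable N"
  proof (rule measurable_cong)
    fix \<theta> assume th: "\<theta> \<in> space N"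
    have sm: "(\<lambda>\<omega>. F n (\<omega>, \<theta>)) \<in> borel_measurable M" for n
      by (rule measurable_Pair1[OF Fm th])
    have Sm: "(\<lambda>\<omega>. SUP n. F n (\<omega>, \<theta>)) \<in> borel_measurable M"
      using sm by measurable
    have "\<rho> (\<lambda>\<omega>. SUP n. F n (\<omega>, \<theta>)) \<le> (SUP n. \<rho> (\<lambda>\<omega>. F n (\<omega>, \<theta>)))"
      using fatou_rule[OF fat, of "\<lambda>n \<omega>. F n (\<omega>, \<theta>)"] sm inc.hyps(2) th by simp
    moreover have "(SUP n. \<rho> (\<lambda>\<omega>. F n (\<omega>, \<theta>))) \<le> \<rho> (\<lambda>\<omega>. SUP n. F n (\<omega>, \<theta>))"
      by (intro SUP_least fqn_F2[OF fqn sm Sm] SUP_upper) auto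
    ultimately show "\<rho> (\<lambda>\<omega>. SUP n. F n (\<omega>, \<theta>)) = (SUP n. \<rho> (\<lambda>\<omega>. F n (\<omega>, \<theta>)))"
      by (rule antisym)
  qed
  moreover have "(\<lambda>\<theta>. SUP n. \<rho> (\<lambda>\<omega>. F n (\<omega>, \<theta>))) \<in> borel_measurable N"
    by (rule borel_measurable_SUP) (auto intro: inc.IH)
  ultimately show ?case by blast
next
  case (dec F K)
  have Fm: "F n \<in> borel_measurable (M \<Otimes>\<^sub>M N)" for n using dec.hyps(1) by (rule CC_meas)
  have "(\<lambda>\<theta>. \<rho> (\<lambda>\<omega>. INF n. F n (\<omega>, \<theta>))) \<in> borel_measurable N \<longleftrightarrow>
        (\<lambda>\<theta>. INF n. \<rho> (\<lambda>\<omega>. F n (\<omega>, \<theta>))) \<in> borel_measurable N"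
  proof (rule measurable_cong)
    fix \<theta> assume th: "\<theta> \<in> space N"
    have sm: "(\<lambda>\<omega>. F n (\<omega>, \<theta>)) \<in> borel_measurable M" for n
      by (rule measurable_Pair1[OF Fm th])
    have lim: "(\<lambda>n. \<rho> (\<lambda>\<omega>. F n (\<omega>, \<theta>))) \<longlonglongrightarrow> \<rho> (\<lambda>\<omega>. INF n. F n (\<omega>, \<theta>))"
    proof (rule abs_cont_scaled[OF fqn lac E sm])
      show "decseq (\<lambda>n. F n (\<omega>, \<theta>))" if "\<omega> \<in> space M" for \<omega>
        using dec.hyps(2) that th by auto
      show "F 0 (\<omega>, \<theta>) \<le> ennreal K * indicator E \<omega>" if "\<omega> \<in> space M" for \<omega>
        using dec.hyps(3)[of "(\<omega>, \<theta>)" 0] that th by (auto simp: indicator_def)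
    qed
    have "decseq (\<lambda>n. \<rho> (\<lambda>\<omega>. F n (\<omega>, \<theta>)))"
      unfolding decseq_def
    proof (intro allI impI)
      fix m n :: nat assume "m \<le> n"
      then show "\<rho> (\<lambda>\<omega>. F n (\<omega>, \<theta>)) \<le> \<rho> (\<lambda>\<omega>. F m (\<omega>, \<theta>))"
        using dec.hyps(2) th by (intro fqn_F2[OF fqn sm sm]) (auto simp: decseq_def)
    qed
    then have "(\<lambda>n. \<rho> (\<lambda>\<omega>. F n (\<omega>, \<theta>))) \<longlonglongrightarrow> (INF n. \<rho> (\<lambda>\<omega>. F n (\<omega>, \<theta>)))"
      by (rule LIMSEQ_INF)
    with lim show "\<rho> (\<lambda>\<omega>. INF n. F n (\<omega>, \<theta>)) = (INF n. \<rho> (\<lambda>\<omega>. F n (\<omega>, \<theta>)))"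
      by (rule LIMSEQ_unique)
  qed
  moreover have "(\<lambda>\<theta>. INF n. \<rho> (\<lambda>\<omega>. F n (\<omega>, \<theta>))) \<in> borel_measurable N"
    by (rule borel_measurable_INF) (auto intro: dec.IH)
  ultimately show ?case by blast
qed


lemma bnd_max: "(x::ennreal) \<le> ennreal K * i \<Longrightarrow> x \<le> ennreal (max 0 K) * i"
proof (cases "K \<ge> 0")
  case False
  then have "ennreal K = 0" by (simp add: ennreal_eq_0_iff)
  moreover assume "x \<le> ennreal K * i"
  ultimately show ?thesis by simp
qed (simp add: max_def)

lemma mult_bnd:
  assumes c: "c \<ge> 0" and x: "(x::ennreal) \<le> ennreal K * i"
  shows "ennreal c * x \<le> ennreal (c * max 0 K) * i"
proof -
  have "ennreal c * x \<le> ennreal c * (ennreal (max 0 K) * i)"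
    using bnd_max[OF x] by (rule mult_left_mono) simp
  also have "\<dots> = ennreal (c * max 0 K) * i"
    using c by (simp add: ennreal_mult mult.assoc)
  finally show ?thesis .
qed

lemma CC_compl:
  assumes E: "E \<in> sets M" and f: "f \<in> CC M N E"
  shows "(\<lambda>x. ennreal K' * indicator (E \<times> space N) x - f x) \<in> CC M N E"
  using f
proof (induction arbitrary: K' rule: CC.induct)
  case (base p h K)
  show ?case
  proof (rule CC.cong[OF CC.base[of p N "\<lambda>i \<omega>. ennreal K' * indicator E \<omega> - h i \<omega>" M K']])
    show "p \<in> measurable N (count_space UNIV)" by fact
    show "(\<lambda>\<omega>. ennreal K' * indicator E \<omega> - h i \<omega>) \<in> borel_measurable M" for i
      using base(2) E by measurable
    show "ennreal K' * indicator E \<omega> - h i \<omega> \<le> ennreal K' * indicator E \<omega>" for i \<omega> by simp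
    show "ennreal K' * indicator (E \<times> space N) x - h (p (snd x)) (fst x) =
      ennreal K' * indicator E (fst x) - h (p (snd x)) (fst x)" if "x \<in> space M \<times> space N" for x
      using that by (auto simp: indicator_def)
  qed
next
  case (cong g f)
  show ?case by (rule CC.cong[OF cong.IH]) (use cong.hyps(2) in auto)
next
  case (inc F K)
  show ?case
  proof (rule CC.cong[OF CC.dec[of "\<lambda>n x. ennreal K' * indicator (E \<times> space N) x - F n x" M N E K']])
    show "(\<lambda>x. ennreal K' * indicator (E \<times> space N) x - F n x) \<in> CC M N E" for n by (rule inc.IH)
    show "decseq (\<lambda>n. ennreal K' * indicator (E \<times> space N) x - F n x)" if "x \<in> space M \<times> space N" for x
      using inc.hyps(2)[OF that] unfolding incseq_def decseq_def by (auto intro: ennreal_minus_mono)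
    show "ennreal K' * indicator (E \<times> space N) x - F n x \<le> ennreal K' * indicator (E \<times> space N) x" for n x
      by simp
    show "ennreal K' * indicator (E \<times> space N) x - (SUP n. F n x) =
      (INF n. ennreal K' * indicator (E \<times> space N) x - F n x)" for x
      by (rule ennreal_SUP_const_minus[symmetric]) (auto simp: indicator_def ennreal_mult_less_top)
  qed
next
  case (dec F K)
  show ?case
  proof (rule CC.cong[OF CC.inc[of "\<lambda>n x. ennreal K' * indicator (E \<times> space N) x - F n x" M N E K']])
    show "(\<lambda>x. ennreal K' * indicator (E \<times> space N) x - F n x) \<in> CC M N E" for n by (rule dec.IH)
    show "incseq (\<lambda>n. ennreal K' * indicator (E \<times> space N) x - F n x)" if "x \<in> space M \<times> space N" for x
      using dec.hyps(2)[OF that] unfolding incseq_def decseq_def by (auto intro: ennreal_minus_mono)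
    show "ennreal K' * indicator (E \<times> space N) x - F n x \<le> ennreal K' * indicator (E \<times> space N) x" for n x
      by simp
    show "ennreal K' * indicator (E \<times> space N) x - (INF n. F n x) =
      (SUP n. ennreal K' * indicator (E \<times> space N) x - F n x)" for x
      by (rule ennreal_INF_const_minus[symmetric]) auto
  qed
qed

lemma CC_zero: "(\<lambda>x. 0) \<in> CC M N E"
  using CC.base[of "\<lambda>_. 0::nat" N "\<lambda>i \<omega>. 0" M 0 E] by simp

lemma CC_scale:
  assumes f: "f \<in> CC M N E" and c: "c \<ge> 0"
  shows "(\<lambda>x. ennreal c * f x) \<in> CC M N E"
  using f
proof (induction rule: CC.induct)
  case (base p h K)
  show ?case
  proof (rule CC.base[of p N "\<lambda>i \<omega>. ennreal c * h i \<omega>" M "c * max 0 K"])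
    show "p \<in> measurable N (count_space UNIV)" by fact
    show "(\<lambda>\<omega>. ennreal c * h i \<omega>) \<in> borel_measurable M" for i using base(2) by measurable
    show "ennreal c * h i \<omega> \<le> ennreal (c * max 0 K) * indicator E \<omega>" if w: "\<omega> \<in> space M" for i \<omega>
      by (rule mult_bnd[OF c base(3)[OF w]])
  qed
next
  case (cong g f)
  show ?case by (rule CC.cong[OF cong.IH]) (use cong.hyps(2) in auto)
next
  case (inc F K)
  show ?case
  proof (rule CC.cong[OF CC.inc[of "\<lambda>n x. ennreal c * F n x" M N E "c * max 0 K"]])
    show "(\<lambda>x. ennreal c * F n x) \<in> CC M N E" for n by (rule inc.IH)
    show "incseq (\<lambda>n. ennreal c * F n x)" if "x \<in> space M \<times> space N" for x
      using inc.hyps(2)[OF that] unfolding incseq_def by (auto intro: mult_left_mono)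
    show "ennreal c * F n x \<le> ennreal (c * max 0 K) * indicator (E \<times> space N) x" if x: "x \<in> space M \<times> space N" for n x
      by (rule mult_bnd[OF c inc.hyps(3)[OF x]])
  next
    show "ennreal c * (SUP n. F n x) = (SUP n. ennreal c * F n x)" for x
      by (rule SUP_mult_left_ennreal)
  qed
next
  case (dec F K)
  show ?case
  proof (cases "c = 0")
    case True
    then show ?thesis using CC_zero by simp
  next
    case False
    with c have c0: "c > 0" by simp
    show ?thesis
    proof (rule CC.cong[OF CC.dec[of "\<lambda>n x. ennreal c * F n x" M N E "c * max 0 K"]])
      show "(\<lambda>x. ennreal c * F n x) \<in> CC M N E" for n by (rule dec.IH)
      show "decseq (\<lambda>n. ennreal c * F n x)" if "x \<in> space M \<times> space N" for x
        using dec.hyps(2)[OF that] unfolding decseq_def by (auto intro: mult_left_mono)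
      show "ennreal c * F n x \<le> ennreal (c * max 0 K) * indicator (E \<times> space N) x" if x: "x \<in> space M \<times> space N" for n x
        by (rule mult_bnd[OF c dec.hyps(3)[OF x]])
    next
      show "ennreal c * (INF n. F n x) = (INF n. ennreal c * F n x)" for x
        by (rule INF_mult_left_ennreal'[OF c0])
    qed
  qed
qed


lemma add_bnd:
  assumes "(x::ennreal) \<le> ennreal K1 * i" "y \<le> ennreal K2 * i"
  shows "x + y \<le> ennreal (max 0 K1 + max 0 K2) * i"
proof -
  have "x + y \<le> ennreal (max 0 K1) * i + ennreal (max 0 K2) * i"
    using bnd_max[OF assms(1)] bnd_max[OF assms(2)] by (rule add_mono)
  also have "\<dots> = ennreal (max 0 K1 + max 0 K2) * i"
  proof -
    have "ennreal (max 0 K1 + max 0 K2) = ennreal (max 0 K1) + ennreal (max 0 K2)"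
      by (rule ennreal_plus) auto
    then show ?thesis by (simp only: distrib_right)
  qed
  finally show ?thesis .
qed

lemma CC_add_base:
  assumes p: "p \<in> measurable N (count_space (UNIV :: nat set))"
    and h: "\<And>i. h i \<in> borel_measurable M"
    and hb: "\<And>i \<omega>. \<omega> \<in> space M \<Longrightarrow> h i \<omega> \<le> ennreal Ks * indicator E \<omega>"
    and f: "f \<in> CC M N E"
  shows "(\<lambda>x. f x + h (p (snd x)) (fst x)) \<in> CC M N E"
  using f
proof (induction rule: CC.induct)
  case (base p1 h1 K1)
  have q: "(\<lambda>\<theta>. prod_encode (p1 \<theta>, p \<theta>)) \<in> measurable N (count_space UNIV)"
  proof (rule measurable_compose_countable[where g=p1 and f="\<lambda>j \<theta>. prod_encode (j, p \<theta>)"])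
    show "(\<lambda>\<theta>. prod_encode (j, p \<theta>)) \<in> measurable N (count_space UNIV)" for j
      by (rule measurable_compose[OF p]) simp
  qed fact
  show ?case
  proof (rule CC.cong[OF CC.base[of "\<lambda>\<theta>. prod_encode (p1 \<theta>, p \<theta>)" N
        "\<lambda>i \<omega>. h1 (fst (prod_decode i)) \<omega> + h (snd (prod_decode i)) \<omega>" M "max 0 K1 + max 0 Ks"]])
    show "(\<lambda>\<omega>. h1 (fst (prod_decode i)) \<omega> + h (snd (prod_decode i)) \<omega>) \<in> borel_measurable M" for i
      using base(2) h by measurable
    show "h1 (fst (prod_decode i)) \<omega> + h (snd (prod_decode i)) \<omega> \<le> ennreal (max 0 K1 + max 0 Ks) * indicator E \<omega>"
      if "\<omega> \<in> space M" for i \<omega>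
      using base(3)[OF that] hb[OF that] by (rule add_bnd)
  qed (use q in auto)
next
  case (cong g f)
  show ?case by (rule CC.cong[OF cong.IH]) (use cong.hyps(2) in auto)
next
  case (inc F K)
  show ?case
  proof (rule CC.cong[OF CC.inc[of "\<lambda>n x. F n x + h (p (snd x)) (fst x)" M N E "max 0 K + max 0 Ks"]])
    show "(\<lambda>x. F n x + h (p (snd x)) (fst x)) \<in> CC M N E" for n by (rule inc.IH)
    show "incseq (\<lambda>n. F n x + h (p (snd x)) (fst x))" if "x \<in> space M \<times> space N" for x
      using inc.hyps(2)[OF that] unfolding incseq_def by (auto intro: add_right_mono)
    show "F n x + h (p (snd x)) (fst x) \<le> ennreal (max 0 K + max 0 Ks) * indicator (E \<times> space N) x"
      if x: "x \<in> space M \<times> space N" for n x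
    proof (rule add_bnd[OF inc.hyps(3)[OF x]])
      show "h (p (snd x)) (fst x) \<le> ennreal Ks * indicator (E \<times> space N) x"
      proof -
        have "indicator (E \<times> space N) x = (indicator E (fst x) :: ennreal)"
          using x by (auto simp: indicator_def)
        then show ?thesis using hb[of "fst x" "p (snd x)"] x by auto
      qed
    qed
    show "(SUP n. F n x) + h (p (snd x)) (fst x) = (SUP n. F n x + h (p (snd x)) (fst x))" for x
      by (rule ennreal_SUP_add_left[symmetric]) simp
  qed
next
  case (dec F K)
  show ?case
  proof (rule CC.cong[OF CC.dec[of "\<lambda>n x. F n x + h (p (snd x)) (fst x)" M N E "max 0 K + max 0 Ks"]])
    show "(\<lambda>x. F n x + h (p (snd x)) (fst x)) \<in> CC M N E" for n by (rule dec.IH)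
    show "decseq (\<lambda>n. F n x + h (p (snd x)) (fst x))" if "x \<in> space M \<times> space N" for x
      using dec.hyps(2)[OF that] unfolding decseq_def by (auto intro: add_right_mono)
    show "F n x + h (p (snd x)) (fst x) \<le> ennreal (max 0 K + max 0 Ks) * indicator (E \<times> space N) x"
      if x: "x \<in> space M \<times> space N" for n x
    proof (rule add_bnd[OF dec.hyps(3)[OF x]])
      show "h (p (snd x)) (fst x) \<le> ennreal Ks * indicator (E \<times> space N) x"
      proof -
        have "indicator (E \<times> space N) x = (indicator E (fst x) :: ennreal)"
          using x by (auto simp: indicator_def)
        then show ?thesis using hb[of "fst x" "p (snd x)"] x by auto
      qed
    qed
    show "(INF n. F n x) + h (p (snd x)) (fst x) = (INF n. F n x + h (p (snd x)) (fst x))" for x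
      by (rule INF_ennreal_add_const[symmetric])
  qed
qed

lemma CC_add:
  assumes f: "f \<in> CC M N E" and g: "g \<in> CC M N E"
  shows "(\<lambda>x. f x + g x) \<in> CC M N E"
  using g
proof (induction rule: CC.induct)
  case (base p h K)
  show ?case by (rule CC_add_base[OF base f])
next
  case (cong g g')
  show ?case by (rule CC.cong[OF cong.IH]) (use cong.hyps(2) in auto)
next
  case (inc F K)
  obtain Kf where Kf: "\<forall>x\<in>space M \<times> space N. f x \<le> ennreal Kf * indicator (E \<times> space N) x"
    using CC_bnd[OF f] by blast
  show ?case
  proof (rule CC.cong[OF CC.inc[of "\<lambda>n x. f x + F n x" M N E "max 0 Kf + max 0 K"]])
    show "(\<lambda>x. f x + F n x) \<in> CC M N E" for n by (rule inc.IH)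
    show "incseq (\<lambda>n. f x + F n x)" if "x \<in> space M \<times> space N" for x
      using inc.hyps(2)[OF that] unfolding incseq_def by (auto intro: add_left_mono)
    show "f x + F n x \<le> ennreal (max 0 Kf + max 0 K) * indicator (E \<times> space N) x"
      if x: "x \<in> space M \<times> space N" for n x
      using Kf x inc.hyps(3)[OF x] by (intro add_bnd) auto
    show "f x + (SUP n. F n x) = (SUP n. f x + F n x)" for x
      by (rule ennreal_SUP_add_right) simp
  qed
next
  case (dec F K)
  obtain Kf where Kf: "\<forall>x\<in>space M \<times> space N. f x \<le> ennreal Kf * indicator (E \<times> space N) x"
    using CC_bnd[OF f] by blast
  show ?case
  proof (rule CC.cong[OF CC.dec[of "\<lambda>n x. f x + F n x" M N E "max 0 Kf + max 0 K"]])
    show "(\<lambda>x. f x + F n x) \<in> CC M N E" for n by (rule dec.IH)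
    show "decseq (\<lambda>n. f x + F n x)" if "x \<in> space M \<times> space N" for x
      using dec.hyps(2)[OF that] unfolding decseq_def by (auto intro: add_left_mono)
    show "f x + F n x \<le> ennreal (max 0 Kf + max 0 K) * indicator (E \<times> space N) x"
      if x: "x \<in> space M \<times> space N" for n x
      using Kf x dec.hyps(3)[OF x] by (intro add_bnd) auto
    show "f x + (INF n. F n x) = (INF n. f x + F n x)" for x
      using INF_ennreal_add_const[of "\<lambda>n. F n x" "f x"] by (simp add: add.commute)
  qed
qed

lemma CC_sum:
  assumes "finite I" "\<And>i. i \<in> I \<Longrightarrow> F i \<in> CC M N E"
  shows "(\<lambda>x. \<Sum>i\<in>I. F i x) \<in> CC M N E"
  using assms
proof (induction rule: finite_induct)
  case empty
  then show ?case using CC_zero by simp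
next
  case (insert a I)
  then show ?case using CC_add[of "F a" M N E "\<lambda>x. \<Sum>i\<in>I. F i x"] by simp
qed


lemma CC_set:
  assumes E: "E \<in> sets M" and A: "A \<in> sets (M \<Otimes>\<^sub>M N)"
  shows "(\<lambda>x. indicator (A \<inter> (E \<times> space N)) x :: ennreal) \<in> CC M N E"
proof -
  have A': "A \<in> sigma_sets (space M \<times> space N) {a \<times> b | a b. a \<in> sets M \<and> b \<in> sets N}"
    using A by (simp add: sets_pair_measure)
  have closed: "{a \<times> b | a b. a \<in> sets M \<and> b \<in> sets N} \<subseteq> Pow (space M \<times> space N)"
  proof
    fix X assume "X \<in> {a \<times> b | a b. a \<in> sets M \<and> b \<in> sets N}"
    then obtain a b where "X = a \<times> b" "a \<in> sets M" "b \<in> sets N" by blast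
    then show "X \<in> Pow (space M \<times> space N)"
      using sets.sets_into_space[of a M] sets.sets_into_space[of b N] by auto
  qed
  from Int_stable_pair_measure_generator closed A'
  show ?thesis
  proof (induction rule: sigma_sets_induct_disjoint)
    case (basic A)
    then obtain a b where ab: "A = a \<times> b" "a \<in> sets M" "b \<in> sets N" by blast
    have p: "(\<lambda>\<theta>. if \<theta> \<in> b then 1 else 0::nat) \<in> measurable N (count_space UNIV)"
      using ab(3) by (intro measurable_If_set measurable_const) auto
    show ?case
    proof (rule CC.cong[OF CC.base[OF p, of "\<lambda>i \<omega>. if i = 1 then indicator (a \<inter> E) \<omega> else 0" M 1]])
      show "(\<lambda>\<omega>. if i = (1::nat) then indicator (a \<inter> E) \<omega> else 0 :: ennreal) \<in> borel_measurable M" for i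
        using ab(2) E by (cases "i = 1") auto
      show "(if i = (1::nat) then indicator (a \<inter> E) \<omega> else 0 :: ennreal) \<le> ennreal 1 * indicator E \<omega>" for i \<omega>
        by (auto simp: indicator_def)
      show "indicator (A \<inter> E \<times> space N) x =
        (if (if snd x \<in> b then 1 else 0::nat) = 1 then indicator (a \<inter> E) (fst x) else 0 :: ennreal)"
        if "x \<in> space M \<times> space N" for x
        using that ab by (auto simp: indicator_def)
    qed
  next
    case empty
    then show ?case using CC_zero by simp
  next
    case (compl A)
    show ?case
    proof (rule CC.cong[OF CC_compl[OF E compl(2), of 1]])
      show "indicator ((space M \<times> space N - A) \<inter> E \<times> space N) x =
        ennreal 1 * indicator (E \<times> space N) x - indicator (A \<inter> E \<times> space N) x"
        if "x \<in> space M \<times> space N" for x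
        using that by (auto simp: indicator_def)
    qed
  next
    case (union A)
    have dj: "disjoint_family (\<lambda>i. A i \<inter> (E \<times> space N))"
      using union(1) unfolding disjoint_family_on_def by auto
    have eq: "indicator ((\<Union>i. A i) \<inter> (E \<times> space N)) x =
      (SUP n. \<Sum>i<n. indicator (A i \<inter> (E \<times> space N)) x :: ennreal)" for x
    proof -
      have "(\<Union>i. A i) \<inter> (E \<times> space N) = (\<Union>i. A i \<inter> (E \<times> space N))" by auto
      then have "indicator ((\<Union>i. A i) \<inter> (E \<times> space N)) x = (\<Sum>i. indicator (A i \<inter> (E \<times> space N)) x :: ennreal)"
        using suminf_indicator[OF dj, of x] by simp
      also have "\<dots> = (SUP n. \<Sum>i<n. indicator (A i \<inter> (E \<times> space N)) x :: ennreal)"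
        by (rule suminf_eq_SUP)
      finally show ?thesis .
    qed
    show ?case
    proof (rule CC.cong[OF CC.inc[of "\<lambda>n x. \<Sum>i<n. indicator (A i \<inter> (E \<times> space N)) x" M N E 1]])
      show "(\<lambda>x. \<Sum>i<n. indicator (A i \<inter> (E \<times> space N)) x :: ennreal) \<in> CC M N E" for n
        using union(3) by (intro CC_sum) auto
      show "incseq (\<lambda>n. \<Sum>i<n. indicator (A i \<inter> (E \<times> space N)) x :: ennreal)" for x
        by (rule incseq_sumI) simp
      show "(\<Sum>i<n. indicator (A i \<inter> (E \<times> space N)) x :: ennreal) \<le> ennreal 1 * indicator (E \<times> space N) x" for n x
      proof -
        have "(\<Sum>i<n. indicator (A i \<inter> (E \<times> space N)) x :: ennreal) \<le> indicator ((\<Union>i. A i) \<inter> (E \<times> space N)) x"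
          unfolding eq by (rule SUP_upper) simp
        also have "\<dots> \<le> ennreal 1 * indicator (E \<times> space N) x" by (auto simp: indicator_def)
        finally show ?thesis .
      qed
    qed (use eq in auto)
  qed
qed

lemma CC_bounded:
  assumes E: "E \<in> sets M" and f: "f \<in> borel_measurable (M \<Otimes>\<^sub>M N)"
    and fb: "\<And>x. x \<in> space M \<times> space N \<Longrightarrow> f x \<le> ennreal K * indicator (E \<times> space N) x"
  shows "f \<in> CC M N E"
proof -
  obtain U where U: "\<And>i. simple_function (M \<Otimes>\<^sub>M N) (U i)" "incseq U" "\<And>i x. U i x < top"
    "\<And>x. (SUP i. U i x) = f x"
    using borel_measurable_implies_simple_function_sequence'[OF f] by blast
  define S where "S = space M \<times> space N"
  have S: "space (M \<Otimes>\<^sub>M N) = S" by (simp add: S_def space_pair_measure)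
  define G where "G i x = (\<Sum>y\<in>U i ` S. ennreal (enn2real y) * indicator ((U i -` {y} \<inter> S) \<inter> (E \<times> space N)) x)" for i x
  have GC: "(\<lambda>x. G i x) \<in> CC M N E" for i
    unfolding G_def
  proof (rule CC_sum)
    show "finite (U i ` S)" using simple_functionD(1)[OF U(1)] S by simp
    fix y
    have "U i -` {y} \<inter> S \<in> sets (M \<Otimes>\<^sub>M N)" using simple_functionD(2)[OF U(1), of i "{y}"] S by simp
    from CC_scale[OF CC_set[OF E this], of "enn2real y"]
    show "(\<lambda>x. ennreal (enn2real y) * indicator (U i -` {y} \<inter> S \<inter> E \<times> space N) x) \<in> CC M N E"
      by simp
  qed
  have Uf: "U i x \<le> f x" for i x
  proof -
    have "U i x \<le> (SUP i. U i x)" by (rule SUP_upper) simp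
    then show ?thesis using U(4)[of x] by simp
  qed
  have GU: "G i x = U i x" if x: "x \<in> S" for i x
  proof -
    have xs: "x \<in> space (M \<Otimes>\<^sub>M N)" using x S by simp
    have rep: "U i x = (\<Sum>y\<in>U i ` S. y * indicator (U i -` {y} \<inter> S) x)"
      using simple_function_indicator_representation[OF U(1) xs] unfolding S .
    have "G i x = (\<Sum>y\<in>U i ` S. y * indicator (U i -` {y} \<inter> S) x * indicator (E \<times> space N) x)"
      unfolding G_def
    proof (rule sum.cong[OF refl])
      fix y assume "y \<in> U i ` S"
      then obtain s where "y = U i s" by blast
      then have "ennreal (enn2real y) = y" using U(3)[of i s] by (simp only: ennreal_enn2real)
      then show "ennreal (enn2real y) * indicator (U i -` {y} \<inter> S \<inter> E \<times> space N) x =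
        y * indicator (U i -` {y} \<inter> S) x * indicator (E \<times> space N) x"
        by (simp only: indicator_inter_arith mult.assoc)
    qed
    also have "\<dots> = U i x * indicator (E \<times> space N) x"
      unfolding rep by (rule sum_distrib_right[symmetric])
    also have "\<dots> = U i x"
    proof (cases "x \<in> E \<times> space N")
      case False
      have "U i x \<le> f x" by (rule Uf)
      also have "f x \<le> ennreal K * indicator (E \<times> space N) x" using fb x S_def by simp
      also have "\<dots> = 0" using False by simp
      finally show ?thesis by simp
    qed simp
    finally show ?thesis .
  qed
  show ?thesis
  proof (rule CC.cong[OF CC.inc[of "\<lambda>i x. G i x" M N E K]])
    show "(\<lambda>x. G i x) \<in> CC M N E" for i by (rule GC)
    show "incseq (\<lambda>i. G i x)" if "x \<in> space M \<times> space N" for x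
      unfolding incseq_def
    proof (intro allI impI)
      fix m n :: nat assume "m \<le> n"
      then have "U m x \<le> U n x" using U(2) unfolding incseq_def le_fun_def by blast
      then show "G m x \<le> G n x" using GU[of x m] GU[of x n] that S_def by simp
    qed
    show "G i x \<le> ennreal K * indicator (E \<times> space N) x" if "x \<in> space M \<times> space N" for i x
      using GU[of x i] that Uf[of i x] fb[OF that] S_def by simp
    show "f x = (SUP i. G i x)" if "x \<in> space M \<times> space N" for x
      using GU that U(4)[of x] S_def by simp
  qed
qed


lemma main_f:
  assumes sf: "sigma_finite_measure M"
    and fqn: "function_quasi_norm M \<rho>" and fat: "fatou_property M \<rho>"
    and lac: "locally_absolutely_continuous M \<rho>"
    and f: "f \<in> borel_measurable (M \<Otimes>\<^sub>M N)"
  shows "(\<lambda>\<theta>. \<rho> (\<lambda>\<omega>. f (\<omega>, \<theta>))) \<in> borel_measurable N"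
proof -
  obtain A :: "nat \<Rightarrow> 'a set" where A: "range A \<subseteq> sets M" "(\<Union>i. A i) = space M"
    "\<And>i. emeasure M (A i) \<noteq> \<infinity>" "incseq A"
    using sigma_finite_measure.sigma_finite_incseq[OF sf] by metis
  have Am[measurable]: "A k \<in> sets M" for k using A(1) by auto
  define g where "g k x = min (ennreal (real k)) (f x) * indicator (A k) (fst x)" for k x
  have gm: "g k \<in> borel_measurable (M \<Otimes>\<^sub>M N)" for k
    unfolding g_def using f by measurable
  have gC: "g k \<in> CC M N (A k)" for k
  proof (rule CC_bounded[OF Am gm, of _ "real k"])
    fix x assume "x \<in> space M \<times> space N"
    then show "g k x \<le> ennreal (real k) * indicator (A k \<times> space N) x"
      by (auto simp: g_def indicator_def)
  qed
  have gH: "(\<lambda>\<theta>. \<rho> (\<lambda>\<omega>. g k (\<omega>, \<theta>))) \<in> borel_measurable N" for k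
    by (rule CC_H[OF fqn fat lac Am _ gC]) (use A(3) in \<open>simp add: less_top\<close>)
  have eq: "\<rho> (\<lambda>\<omega>. f (\<omega>, \<theta>)) = (SUP k. \<rho> (\<lambda>\<omega>. g k (\<omega>, \<theta>)))" if th: "\<theta> \<in> space N" for \<theta>
  proof -
    have fs: "(\<lambda>\<omega>. f (\<omega>, \<theta>)) \<in> borel_measurable M" by (rule measurable_Pair1[OF f th])
    have gs: "(\<lambda>\<omega>. g k (\<omega>, \<theta>)) \<in> borel_measurable M" for k by (rule measurable_Pair1[OF gm th])
    have gle: "g k x \<le> f x" for k x
      unfolding g_def by (auto simp: indicator_def)
    have gmono: "incseq (\<lambda>k. g k x)" for x
      unfolding incseq_def g_def
    proof (intro allI impI)
      fix m n :: nat assume mn: "m \<le> n"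
      have "indicator (A m) (fst x) \<le> (indicator (A n) (fst x) :: ennreal)"
        using A(4) mn unfolding incseq_def by (auto simp: indicator_def)
      moreover have "min (ennreal (real m)) (f x) \<le> min (ennreal (real n)) (f x)"
        using mn by (intro min.mono ennreal_leI) auto
      ultimately show "min (ennreal (real m)) (f x) * indicator (A m) (fst x)
          \<le> min (ennreal (real n)) (f x) * indicator (A n) (fst x)"
        by (intro mult_mono) auto
    qed
    have sup: "(SUP k. g k (\<omega>, \<theta>)) = f (\<omega>, \<theta>)" if w: "\<omega> \<in> space M" for \<omega>
    proof (rule antisym)
      show "(SUP k. g k (\<omega>, \<theta>)) \<le> f (\<omega>, \<theta>)" by (rule SUP_least) (rule gle)
      obtain k0 where k0: "\<omega> \<in> A k0" using A(2) w by auto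
      show "f (\<omega>, \<theta>) \<le> (SUP k. g k (\<omega>, \<theta>))"
      proof (rule ccontr)
        let ?S = "SUP k. g k (\<omega>, \<theta>)"
        assume "\<not> f (\<omega>, \<theta>) \<le> ?S"
        then have lt: "?S < f (\<omega>, \<theta>)" by simp
        then have "?S < top" using top.not_eq_extremum by fastforce
        then obtain n where n: "?S < of_nat n" using ennreal_Ex_less_of_nat by blast
        define k where "k = max n k0"
        have "A k0 \<subseteq> A k" using A(4) unfolding k_def incseq_def by simp
        then have "\<omega> \<in> A k" using k0 by blast
        then have gk: "g k (\<omega>, \<theta>) = min (ennreal (real k)) (f (\<omega>, \<theta>))" by (simp add: g_def)
        have "(of_nat n :: ennreal) \<le> of_nat k" unfolding k_def by (rule of_nat_mono) simp
        then have "?S < of_nat k" using n by (rule order.strict_trans2[rotated])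
        then have "?S < ennreal (real k)" by (simp only: ennreal_of_nat_eq_real_of_nat)
        then have "?S < g k (\<omega>, \<theta>)" using lt gk by simp
        moreover have "g k (\<omega>, \<theta>) \<le> ?S" by (rule SUP_upper) simp
        ultimately show False by simp
      qed
    qed
    have "\<rho> (\<lambda>\<omega>. f (\<omega>, \<theta>)) = \<rho> (\<lambda>\<omega>. SUP k. g k (\<omega>, \<theta>))"
      by (rule fqn_eq[OF fqn fs]) (use gs sup in auto)
    also have "\<dots> \<le> (SUP k. \<rho> (\<lambda>\<omega>. g k (\<omega>, \<theta>)))"
      using fatou_rule[OF fat, of "\<lambda>k \<omega>. g k (\<omega>, \<theta>)"] gs gmono by simp
    finally have le1: "\<rho> (\<lambda>\<omega>. f (\<omega>, \<theta>)) \<le> (SUP k. \<rho> (\<lambda>\<omega>. g k (\<omega>, \<theta>)))" .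
    have "(SUP k. \<rho> (\<lambda>\<omega>. g k (\<omega>, \<theta>))) \<le> \<rho> (\<lambda>\<omega>. f (\<omega>, \<theta>))"
      by (intro SUP_least fqn_F2[OF fqn gs fs] gle)
    with le1 show ?thesis by (rule antisym)
  qed
  have "(\<lambda>\<theta>. SUP k. \<rho> (\<lambda>\<omega>. g k (\<omega>, \<theta>))) \<in> borel_measurable N"
    using gH by measurable
  then show ?thesis by (subst measurable_cong[OF eq]) auto
qed

theorem proposition3p38:
  fixes M :: "'a measure" and N :: "'b measure"
    and \<rho> :: "('a \<Rightarrow> ennreal) \<Rightarrow> ennreal"
    and f :: "'a \<times> 'b \<Rightarrow> ennreal" and g :: "'b \<times> 'a \<Rightarrow> ennreal"
  assumes "sigma_finite_measure M" and "sigma_finite_measure N"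
    and "function_quasi_norm M \<rho>" and "fatou_property M \<rho>"
    and "locally_absolutely_continuous M \<rho>"
    and "f \<in> borel_measurable (M \<Otimes>\<^sub>M N)"
    and "g \<in> borel_measurable (N \<Otimes>\<^sub>M M)"
  shows "(\<lambda>\<theta>. \<rho> (\<lambda>\<omega>. f (\<omega>, \<theta>))) \<in> borel_measurable N \<and>
         (\<lambda>\<theta>. \<rho> (\<lambda>\<omega>. g (\<theta>, \<omega>))) \<in> borel_measurable N"
proof
  show "(\<lambda>\<theta>. \<rho> (\<lambda>\<omega>. f (\<omega>, \<theta>))) \<in> borel_measurable N"
    by (rule main_f[OF assms(1,3,4,5,6)])
  have g': "(\<lambda>x. g (snd x, fst x)) \<in> borel_measurable (M \<Otimes>\<^sub>M N)"
    using assms(7) by measurable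
  show "(\<lambda>\<theta>. \<rho> (\<lambda>\<omega>. g (\<theta>, \<omega>))) \<in> borel_measurable N"
    using main_f[OF assms(1,3,4,5) g'] by simp
qed

end
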